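(* Let $a<b$ be real numbers, $J=(a,b)\times 0\subset\mathbb{R}^2$, $N=J\cup\mathbb{R}\times(0,+\infty)$, and let $U$ be an open neighborhood of $J$ in $N$. Then there exists a half open trapezoid $T\subset U$ with base $J$.
   Context: For $c<d$ and continuous $\alpha,\beta:(c,d]\to\mathbb{R}$ with $\alpha(y)<\beta(y)$ for all $y$, the set $T=\{(x,y)\in\mathbb{R}^2:\alpha(y)\le x\le\beta(y),\ c<y\le d\}$ is a half open trapezoid. If the (finite or infinite) limits $\lim_{y\to c+0}\alpha(y)=a'$ and $\lim_{y\to c+0}\beta(y)=b'$ exist with $a'<b'$, then $(a',b')\times c$ is called the (lower) base of $T$. *)

theory Defs
  imports "HOL-Analysis.Analysis"
begin

definition trapezoid_set :: "real \<Rightarrow> real \<Rightarrow> (real \<Rightarrow> real) \<Rightarrow> (real \<Rightarrow> real) \<Rightarrow> (real \<times> real) set" where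
  "trapezoid_set c d \<alpha> \<beta> = {(x, y). \<alpha> y \<le> x \<and> x \<le> \<beta> y \<and> c < y \<and> y \<le> d}"

definition half_open_trapezoid ::
  "(real \<times> real) set \<Rightarrow> real \<Rightarrow> real \<Rightarrow> (real \<Rightarrow> real) \<Rightarrow> (real \<Rightarrow> real) \<Rightarrow> bool" where
  "half_open_trapezoid T c d \<alpha> \<beta> \<longleftrightarrow>
     c < d \<and> continuous_on {c<..d} \<alpha> \<and> continuous_on {c<..d} \<beta> \<and>
     (\<forall>y\<in>{c<..d}. \<alpha> y < \<beta> y) \<and> T = trapezoid_set c d \<alpha> \<beta>"

text \<open>The (lower) base of T is the open segment (a',b') x {c} with finite a' < b'
  (only finite bases are needed here).\<close>
definition has_base ::
  "real \<Rightarrow> (real \<Rightarrow> real) \<Rightarrow> (real \<Rightarrow> real) \<Rightarrow> (real \<times> real) set \<Rightarrow> bool" where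
  "has_base c \<alpha> \<beta> B \<longleftrightarrow>
     (\<exists>a' b'. a' < b' \<and> (\<alpha> \<longlongrightarrow> a') (at_right c) \<and> (\<beta> \<longlongrightarrow> b') (at_right c)
        \<and> B = {a'<..<b'} \<times> {c})"

end

theory Submission
  imports Defs
begin

theorem lemma5p1:
  fixes a b :: real and U :: "(real \<times> real) set"
  assumes "a < b"
    and "openin (top_of_set ({a<..<b} \<times> {0} \<union> UNIV \<times> {0<..})) U"
    and "{a<..<b} \<times> {0} \<subseteq> U"
  shows "\<exists>T c d \<alpha> \<beta>. half_open_trapezoid T c d \<alpha> \<beta> \<and> T \<subseteq> U
            \<and> has_base c \<alpha> \<beta> ({a<..<b} \<times> {0})"
proof -
  define N where "N = {a<..<b} \<times> {0} \<union> UNIV \<times> {0::real<..}"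
  obtain V where V: "open V" "U = N \<inter> V" using assms(2) unfolding openin_open N_def by blast
  define C where "C = - V \<union> {(a, -1::real)}"
  have Ccl: "closed C" using V(1) unfolding C_def by (intro closed_Un closed_Compl) auto
  have Cne: "C \<noteq> {}" by (auto simp: C_def)
  define q where "q u = infdist (u, 0::real) C" for u
  define D where "D t = Inf (q ` {a+t..b-t})" for t
  define t0 where "t0 = (b - a) / 4"
  have t0: "0 < t0" "t0 < (b-a)/2" using assms(1) by (auto simp: t0_def)
  have qpos: "q u > 0" if "a < u" "u < b" for u
  proof -
    have "(u,0) \<in> U" using assms(3) that by auto
    hence "(u,0) \<notin> C" using V by (auto simp: C_def)
    thus ?thesis unfolding q_def using infdist_pos_not_in_closed[OF Ccl Cne] by blast
  qed
  have qnn: "q u \<ge> 0" for u by (simp add: q_def infdist_nonneg)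
  have qlip: "q u \<le> q u' + \<bar>u - u'\<bar>" for u u'
  proof -
    have "q u \<le> q u' + dist (u,0::real) (u',0)" unfolding q_def by (rule infdist_triangle)
    also have "dist (u,0::real) (u',0) = \<bar>u - u'\<bar>" by (simp add: dist_Pair_Pair dist_real_def)
    finally show ?thesis .
  qed
  have qcont: "continuous_on UNIV q" unfolding q_def
    by (intro continuous_intros)
  have Dlow: "D t \<le> q u" if "u \<in> {a+t..b-t}" for t u
    unfolding D_def by (rule cInf_lower) (use that qnn in \<open>auto intro!: bdd_belowI[where m=0]\<close>)
  have Dgr: "D t \<ge> m" if "a+t \<le> b-t" "\<And>u. u \<in> {a+t..b-t} \<Longrightarrow> m \<le> q u" for t m
    unfolding D_def by (rule cINF_greatest) (use that in auto)
  have Dlip: "D t \<le> D t' + \<bar>t - t'\<bar>" if "0 \<le> t" "t \<le> (b-a)/2" "0 \<le> t'" "t' \<le> (b-a)/2" for t t'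
  proof -
    have "D t - \<bar>t - t'\<bar> \<le> D t'"
    proof (rule Dgr)
      show "a + t' \<le> b - t'" using that by auto
      fix u' assume u': "u' \<in> {a+t'..b-t'}"
      define u where "u = max (a+t) (min (b-t) u')"
      have "u \<in> {a+t..b-t}" using that by (auto simp: u_def)
      hence "D t \<le> q u" by (rule Dlow)
      also have "\<dots> \<le> q u' + \<bar>u - u'\<bar>" by (rule qlip)
      also have "\<bar>u - u'\<bar> \<le> \<bar>t - t'\<bar>" using u' that by (auto simp: u_def)
      finally show "D t - \<bar>t - t'\<bar> \<le> q u'" by simp
    qed
    thus ?thesis by simp
  qed
  have Dcont: "continuous_on {0..t0} D"
  proof (rule lipschitz_on_continuous_on)
    show "1-lipschitz_on {0..t0} D"
    proof (rule lipschitz_onI)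
      fix x y assume "x \<in> {0..t0}" "y \<in> {0..t0}"
      hence "D x \<le> D y + \<bar>x - y\<bar>" "D y \<le> D x + \<bar>y - x\<bar>" using Dlip t0 by auto
      thus "dist (D x) (D y) \<le> 1 * dist x y" by (simp add: dist_real_def)
    qed simp
  qed
  have Dnn: "D t \<ge> 0" if "0 \<le> t" "t \<le> (b-a)/2" for t
    by (rule Dgr) (use that qnn in auto)
  have Dmono: "D t \<le> D t'" if "0 \<le> t" "t \<le> t'" "t' \<le> (b-a)/2" for t t'
  proof (rule Dgr)
    show "a + t' \<le> b - t'" using that by simp
    fix u assume "u \<in> {a+t'..b-t'}"
    hence "u \<in> {a+t..b-t}" using that by auto
    thus "D t \<le> q u" by (rule Dlow)
  qed
  have Dpos: "D t > 0" if "0 < t" "t \<le> t0" for t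
  proof -
    have "compact {a+t..b-t}" by simp
    moreover have "{a+t..b-t} \<noteq> {}" using that t0 by auto
    moreover have "continuous_on {a+t..b-t} q" by (rule continuous_on_subset[OF qcont]) simp
    ultimately have "\<exists>u\<in>{a+t..b-t}. \<forall>v\<in>{a+t..b-t}. q u \<le> q v"
      by (rule continuous_attains_inf)
    then obtain u where u: "u \<in> {a+t..b-t}" "\<And>v. v \<in> {a+t..b-t} \<Longrightarrow> q u \<le> q v"
      by blast
    have "D t \<ge> q u"
    proof (rule Dgr)
      show "a + t \<le> b - t" using that t0 by simp
    qed (rule u(2))
    moreover have "q u > 0" proof (rule qpos)
      show "a < u" using u(1) that by simp
      show "u < b" using u(1) that t0 by simp
    qed
    ultimately show ?thesis by linarith
  qed
  define k where "k = 2 * (t0 + 1)"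
  have k: "k > 0" using t0 by (simp add: k_def)
  define E where "E t = t * D t / k" for t
  have Econt: "continuous_on {0..t0} E" unfolding E_def
    by (intro continuous_intros Dcont) (use k in auto)
  have Emono: "E t < E t'" if "0 \<le> t" "t < t'" "t' \<le> t0" for t t'
  proof -
    have "t * D t \<le> t * D t'" using Dmono[of t t'] that t0 by (intro mult_left_mono) auto
    also have "\<dots> < t' * D t'" using Dpos[of t'] that by (intro mult_strict_right_mono) auto
    finally show ?thesis unfolding E_def using k by (simp add: divide_strict_right_mono)
  qed
  have inj: "inj_on E {0..t0}"
  proof (rule linorder_inj_onI)
    fix x y assume "x < y" "x \<in> {0..t0}" "y \<in> {0..t0}"
    hence "E x < E y" using Emono[of x y] by simp
    thus "E x \<noteq> E y" by simp
  qed auto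
  have E0: "E 0 = 0" by (simp add: E_def)
  define d where "d = E t0"
  have dpos: "d > 0" using Emono[of 0 t0] t0 E0 by (simp add: d_def)
  have img: "E ` {0..t0} = {0..d}"
  proof
    show "E ` {0..t0} \<subseteq> {0..d}"
    proof
      fix y assume "y \<in> E ` {0..t0}"
      then obtain t where t: "t \<in> {0..t0}" "y = E t" by auto
      have e1: "E 0 \<le> E t"
      proof (cases "t = 0")
        case False thus ?thesis using Emono[of 0 t] t by simp
      qed simp
      have "E t \<le> E t0"
      proof (cases "t = t0")
        case False thus ?thesis using Emono[of t t0] t by simp
      qed simp
      thus "y \<in> {0..d}" using e1 t E0 d_def by auto
    qed
    show "{0..d} \<subseteq> E ` {0..t0}"
    proof
      fix y assume "y \<in> {0..d}"
      then obtain t where "0 \<le> t" "t \<le> t0" "E t = y"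
        using IVT'[of E 0 y t0] Econt t0 E0 d_def by auto
      thus "y \<in> E ` {0..t0}" by auto
    qed
  qed
  define \<theta> where "\<theta> = the_inv_into {0..t0} E"
  have th1: "\<theta> (E t) = t" if "t \<in> {0..t0}" for t
    unfolding \<theta>_def using the_inv_into_f_f[OF inj that] .
  have th2: "\<theta> y \<in> {0..t0} \<and> E (\<theta> y) = y" if "y \<in> {0..d}" for y
  proof -
    have "y \<in> E ` {0..t0}" using that unfolding img .
    then obtain t where t: "t \<in> {0..t0}" "y = E t" by (rule imageE)
    have "\<theta> y = t" using th1[OF t(1)] t(2) by simp
    thus ?thesis using t by simp
  qed
  have thcont: "continuous_on {0..d} \<theta>"
  proof -
    have "\<forall>x\<in>{0..t0}. \<theta> (E x) = x" using th1 by blast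
    from continuous_on_inv[OF Econt compact_Icc this] show ?thesis by (simp only: img)
  qed
  have th0: "\<theta> 0 = 0" using th1[of 0] E0 t0 by simp
  have thlim: "(\<theta> \<longlongrightarrow> 0) (at_right 0)"
  proof -
    have "0 \<in> {0..d}" using dpos by simp
    have l1: "(\<theta> \<longlongrightarrow> \<theta> 0) (at 0 within {0..d})"
      using thcont \<open>0 \<in> {0..d}\<close> unfolding continuous_on_def by (rule bspec)
    have l2: "at 0 within {0..d} = at_right (0::real)"
      by (rule at_within_Icc_at_right) (rule dpos)
    show ?thesis using l1 unfolding l2 th0 .
  qed
  define \<alpha> where "\<alpha> y = a + \<theta> y" for y
  define \<beta> where "\<beta> y = b - \<theta> y" for y
  define T where "T = trapezoid_set 0 d \<alpha> \<beta>"
  have thsub: "continuous_on {0<..d} \<theta>" using thcont by (rule continuous_on_subset) auto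
  have "half_open_trapezoid T 0 d \<alpha> \<beta>"
    unfolding half_open_trapezoid_def
  proof (intro conjI ballI)
    show "0 < d" by (rule dpos)
    show "continuous_on {0<..d} \<alpha>" unfolding \<alpha>_def by (intro continuous_intros thsub)
    show "continuous_on {0<..d} \<beta>" unfolding \<beta>_def by (intro continuous_intros thsub)
    fix y assume "y \<in> {0<..d}"
    hence "\<theta> y \<le> t0" using th2 by auto
    thus "\<alpha> y < \<beta> y" using t0 by (simp add: \<alpha>_def \<beta>_def)
  qed (simp add: T_def)
  moreover have "T \<subseteq> U"
  proof
    fix p assume "p \<in> T"
    then obtain x y where p: "p = (x,y)" "\<alpha> y \<le> x" "x \<le> \<beta> y" "0 < y" "y \<le> d"
      by (auto simp: T_def trapezoid_set_def)
    define t where "t = \<theta> y"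
    have t: "t \<in> {0..t0}" "E t = y" using th2[of y] p by (auto simp: t_def)
    have "t \<noteq> 0" using t E0 p by auto
    hence tp: "0 < t" using t by auto
    have "y = t * D t / k" using t by (simp add: E_def)
    also have "\<dots> < D t"
    proof -
      have "t / k < 1" using t k by (simp add: k_def)
      have "D t > 0" using Dpos[of t] tp t by simp
      hence "(t/k) * D t < 1 * D t" using \<open>t / k < 1\<close> by (rule mult_strict_right_mono[rotated])
      thus ?thesis by simp
    qed
    finally have yD: "y < D t" .
    have xr: "x \<in> {a+t..b-t}" using p by (auto simp: t_def \<alpha>_def \<beta>_def)
    have "y < q x" using yD Dlow[OF xr] by linarith
    hence "(x,y) \<notin> C"
    proof -
      assume "y < q x"
      show "(x,y) \<notin> C"
      proof
        assume "(x,y) \<in> C"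
        hence "q x \<le> dist (x,0) (x,y)" unfolding q_def by (rule infdist_le)
        also have "\<dots> = y" using p by (simp add: dist_Pair_Pair dist_real_def)
        finally show False using \<open>y < q x\<close> by simp
      qed
    qed
    hence "(x,y) \<in> V" by (auto simp: C_def)
    moreover have "(x,y) \<in> N" using p by (auto simp: N_def)
    ultimately show "p \<in> U" using V p by auto
  qed
  moreover have "has_base 0 \<alpha> \<beta> ({a<..<b} \<times> {0})"
    unfolding has_base_def
  proof (intro exI conjI)
    show "a < b" by (rule assms(1))
    show "(\<alpha> \<longlongrightarrow> a) (at_right 0)" unfolding \<alpha>_def
      using tendsto_add[OF tendsto_const thlim, of a] by simp
    show "(\<beta> \<longlongrightarrow> b) (at_right 0)" unfolding \<beta>_def
      using tendsto_diff[OF tendsto_const thlim, of b] by simp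
  qed simp
  ultimately show ?thesis by blast
qed

end
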